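(* Let $G$ be a graph and let $k\geq 3$ be an integer. A complex number $\lambda$ is an eigenvalue of the power hypergraph $G^{(k)}$ if and only if: (a) when $k=3$: some signed induced subgraph of $G$ has an eigenvalue $\beta$ with $\beta^2=\lambda^k$; (b) when $k\geq 4$: some signed subgraph of $G$ has an eigenvalue $\beta$ with $\beta^2=\lambda^k$.
   Context: Tensor eigenvalues: for a $k$-order $n$-dimensional complex tensor $T=(t_{i_1\cdots i_k})$ and $\mathbf{x}\in\mathbb{C}^n$, $T\mathbf{x}^{k-1}\in\mathbb{C}^n$ has $i$-th entry $\sum_{i_2,\dots,i_k=1}^n t_{i i_2\cdots i_k}x_{i_2}\cdots x_{i_k}$, and $\mathbf{x}^{[k-1]}=(x_1^{k-1},\dots,x_n^{k-1})^\top$. A number $\lambda\in\mathbb{C}$ is an eigenvalue of $T$ with eigenvector $\mathbf{x}$ if $\mathbf{x}\neq 0$ and $T\mathbf{x}^{k-1}=\lambda\mathbf{x}^{[k-1]}$. The adjacency tensor of a $k$-uniform hypergraph $H$ on $n$ vertices is the $k$-order $n$-dimensional tensor with $a_{i_1\cdots i_k}=\frac{1}{(k-1)!}$ if $\{i_1,\dots,i_k\}$ is an edge of $H$ and $0$ otherwise; eigenvalues of $H$ are the eigenvalues of its adjacency tensor. The $k$-power hypergraph $G^{(k)}$ of a graph $G$ is the $k$-uniform hypergraph obtained by adding $k-2$ new vertices to each edge of $G$ (distinct edges receive disjoint sets of new vertices); for $e\in E(G)$, $N_e$ denotes the set of new vertices added to $e$, so $e\cup N_e$ is a hyperedge. A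 signed graph $G_\pi$ is a graph $G=(V,E)$ with a sign function $\pi:E\to\{+1,-1\}$; its adjacency matrix is the symmetric matrix with $(i,j)$ entry $\pi(i,j)$ if $i\sim j$ and $0$ otherwise, and its eigenvalues are those of this matrix. A signed (induced) subgraph of $G$ is a signed graph $\widehat G_\pi$ where $\widehat G$ is an (induced) subgraph of $G$ and $\pi$ is any sign function on $E(\widehat G)$. *)

theory Defs
  imports Complex_Main
begin

definition graph :: "'a set \<Rightarrow> 'a set set \<Rightarrow> bool" where
  "graph V E \<longleftrightarrow> finite V \<and> (\<forall>e\<in>E. e \<subseteq> V \<and> card e = 2)"

definition adj_tensor :: "nat \<Rightarrow> 'v set set \<Rightarrow> 'v list \<Rightarrow> complex" where
  "adj_tensor k F is = (if set is \<in> F then 1 / of_nat (fact (k - 1)) else 0)"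

definition hyp_eigenvalue :: "nat \<Rightarrow> 'v set \<Rightarrow> 'v set set \<Rightarrow> complex \<Rightarrow> bool" where
  "hyp_eigenvalue k W F lam \<longleftrightarrow>
     (\<exists>x :: 'v \<Rightarrow> complex. (\<exists>i\<in>W. x i \<noteq> 0) \<and>
        (\<forall>i\<in>W. (\<Sum>is\<in>{is. length is = k - 1 \<and> set is \<subseteq> W}.
                    adj_tensor k F (i # is) * prod_list (map x is)) = lam * x i ^ (k - 1)))"

text \<open>The k-power hypergraph G^(k): the new vertices of edge e are Inr (e, j), j < k-2.\<close>
definition new_vertices :: "'a set \<Rightarrow> nat \<Rightarrow> ('a + 'a set \<times> nat) set" where
  "new_vertices e k = {Inr (e, j) | j. j < k - 2}"

definition pow_vertices :: "'a set \<Rightarrow> 'a set set \<Rightarrow> nat \<Rightarrow> ('a + 'a set \<times> nat) set" where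
  "pow_vertices V E k = Inl ` V \<union> (\<Union>e\<in>E. new_vertices e k)"

definition pow_edges :: "'a set set \<Rightarrow> nat \<Rightarrow> ('a + 'a set \<times> nat) set set" where
  "pow_edges E k = {Inl ` e \<union> new_vertices e k | e. e \<in> E}"

definition signed_subgraph ::
  "'a set \<Rightarrow> 'a set set \<Rightarrow> 'a set \<Rightarrow> 'a set set \<Rightarrow> ('a set \<Rightarrow> real) \<Rightarrow> bool" where
  "signed_subgraph V E V' E' sg \<longleftrightarrow> V' \<subseteq> V \<and> E' \<subseteq> E \<and> (\<forall>e\<in>E'. e \<subseteq> V')
      \<and> (\<forall>e\<in>E'. sg e = 1 \<or> sg e = -1)"

definition signed_induced_subgraph ::
  "'a set \<Rightarrow> 'a set set \<Rightarrow> 'a set \<Rightarrow> 'a set set \<Rightarrow> ('a set \<Rightarrow> real) \<Rightarrow> bool" where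
  "signed_induced_subgraph V E V' E' sg \<longleftrightarrow> signed_subgraph V E V' E' sg \<and> E' = {e\<in>E. e \<subseteq> V'}"

definition signed_adj :: "'a set set \<Rightarrow> ('a set \<Rightarrow> real) \<Rightarrow> 'a \<Rightarrow> 'a \<Rightarrow> real" where
  "signed_adj E' sg i j = (if {i, j} \<in> E' then sg {i, j} else 0)"

definition signed_eigenvalue :: "'a set \<Rightarrow> 'a set set \<Rightarrow> ('a set \<Rightarrow> real) \<Rightarrow> complex \<Rightarrow> bool" where
  "signed_eigenvalue V' E' sg beta \<longleftrightarrow>
     (\<exists>v :: 'a \<Rightarrow> complex. (\<exists>i\<in>V'. v i \<noteq> 0) \<and>
        (\<forall>i\<in>V'. (\<Sum>j\<in>V'. complex_of_real (signed_adj E' sg i j) * v j) = beta * v i))"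

end

theory Submission
  imports Defs "HOL-Combinatorics.Multiset_Permutations"
begin


lemma tensor_sum:
  fixes x :: "'v \<Rightarrow> complex"
  assumes W: "finite W" and F: "\<forall>f\<in>F. f \<subseteq> W \<and> card f = k" and i: "i \<in> W" and k: "k \<ge> 1"
  shows "(\<Sum>ys\<in>{ys. length ys = k - 1 \<and> set ys \<subseteq> W}. adj_tensor k F (i # ys) * prod_list (map x ys))
         = (\<Sum>f\<in>{f\<in>F. i\<in>f}. prod x (f - {i}))"
proof -
  let ?L = "{ys. length ys = k - 1 \<and> set ys \<subseteq> W}"
  let ?c = "1 / of_nat (fact (k - 1)) :: complex"
  have finL: "finite ?L" using finite_lists_length_eq[OF W, of "k-1"] by (simp add: conj_commute)
  have finF: "finite F" by (rule finite_subset[of F "Pow W"]) (use F W in auto)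
  have "(\<Sum>ys\<in>?L. adj_tensor k F (i # ys) * prod_list (map x ys))
      = (\<Sum>ys\<in>?L. if set (i#ys) \<in> F then ?c * prod_list (map x ys) else 0)"
    by (rule sum.cong) (auto simp: adj_tensor_def)
  also have "\<dots> = (\<Sum>ys\<in>{ys\<in>?L. set (i#ys) \<in> F}. ?c * prod_list (map x ys))"
    by (rule sum.inter_filter[OF finL, symmetric])
  also have "{ys\<in>?L. set (i#ys) \<in> F} = (\<Union>f\<in>{f\<in>F. i\<in>f}. permutations_of_set (f - {i}))"
  proof (intro equalityI subsetI)
    fix ys assume a: "ys \<in> {ys\<in>?L. set (i#ys) \<in> F}"
    then have f: "set (i#ys) \<in> F" and len: "length ys = k - 1" by auto
    then have "card (set (i#ys)) = length (i#ys)" using F k by auto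
    then have d: "distinct (i#ys)" by (rule card_distinct)
    show "ys \<in> (\<Union>f\<in>{f\<in>F. i\<in>f}. permutations_of_set (f - {i}))"
    proof (rule UN_I[of "set (i#ys)"])
      show "set (i#ys) \<in> {f\<in>F. i\<in>f}" using f by simp
      show "ys \<in> permutations_of_set (set (i # ys) - {i})" using d by (auto simp: permutations_of_set_def)
    qed
  next
    fix ys assume "ys \<in> (\<Union>f\<in>{f\<in>F. i\<in>f}. permutations_of_set (f - {i}))"
    then obtain f where f: "f \<in> F" "i \<in> f" and p: "set ys = f - {i}" "distinct ys"
      by (auto simp: permutations_of_set_def)
    have fin: "finite f" using f F W by (meson finite_subset mem_Collect_eq)
    have "length ys = k - 1" using distinct_card[OF p(2)] p(1) f F fin by (simp add: card_Diff_singleton)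
    moreover have "set (i#ys) = f" using p f by auto
    moreover have "set ys \<subseteq> W" using p f F by blast
    ultimately show "ys \<in> {ys\<in>?L. set (i#ys) \<in> F}" using f(1) by simp
  qed
  also have "(\<Sum>ys\<in>(\<Union>f\<in>{f\<in>F. i\<in>f}. permutations_of_set (f - {i})). ?c * prod_list (map x ys))
     = (\<Sum>f\<in>{f\<in>F. i\<in>f}. \<Sum>ys\<in>permutations_of_set (f - {i}). ?c * prod_list (map x ys))"
  proof (rule sum.UNION_disjoint)
    show "finite {f\<in>F. i\<in>f}" using finF by simp
    show "\<forall>f\<in>{f\<in>F. i\<in>f}. finite (permutations_of_set (f - {i}))"
      by simp
    show "\<forall>f\<in>{f\<in>F. i\<in>f}. \<forall>g\<in>{f\<in>F. i\<in>f}. f \<noteq> g \<longrightarrow>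
        permutations_of_set (f - {i}) \<inter> permutations_of_set (g - {i}) = {}"
      proof (intro ballI impI)
      fix f g assume f: "f \<in> {f\<in>F. i\<in>f}" and g: "g \<in> {f\<in>F. i\<in>f}" and ne: "f \<noteq> g"
      have "f - {i} \<noteq> g - {i}" using f g ne by (metis (mono_tags, lifting) insert_Diff mem_Collect_eq)
      then show "permutations_of_set (f - {i}) \<inter> permutations_of_set (g - {i}) = {}"
        by (auto simp: permutations_of_set_def)
    qed
  qed
  also have "\<dots> = (\<Sum>f\<in>{f\<in>F. i\<in>f}. prod x (f - {i}))"
  proof (rule sum.cong[OF refl])
    fix f assume f: "f \<in> {f\<in>F. i\<in>f}"
    from f have fF: "f \<in> F" "i \<in> f" by auto
    have fW: "f \<subseteq> W" and cardf: "card f = k" using F fF(1) by auto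
    have fin: "finite f" using finite_subset[OF fW W] .
    have cf: "card (f - {i}) = k - 1" using card_Diff_singleton[OF fF(2)] cardf by simp
    have "(\<Sum>ys\<in>permutations_of_set (f - {i}). ?c * prod_list (map x ys))
        = (\<Sum>ys\<in>permutations_of_set (f - {i}). ?c * prod x (f - {i}))"
      proof (rule sum.cong[OF refl])
      fix ys assume "ys \<in> permutations_of_set (f - {i})"
      then have "set ys = f - {i}" "distinct ys" by (auto simp: permutations_of_set_def)
      then show "?c * prod_list (map x ys) = ?c * prod x (f - {i})"
        using prod.distinct_set_conv_list[of ys x] by simp
    qed
    also have "\<dots> = of_nat (fact (k-1)) * (?c * prod x (f - {i}))"
      using fin cf by simp
    also have "\<dots> = prod x (f - {i})" by simp
    finally show "(\<Sum>ys\<in>permutations_of_set (f - {i}). ?c * prod_list (map x ys)) = prod x (f - {i})" .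
  qed
  finally show ?thesis .
qed



lemma kth_root_exists:
  fixes z :: complex assumes "n > 0" shows "\<exists>w. w ^ n = z"
proof -
  have "(rcis (root n (cmod z)) (Arg z / real n)) ^ n = rcis (cmod z) (Arg z)"
    using assms by (simp add: DeMoivre2)
  then show ?thesis using rcis_cmod_Arg by metis
qed

definition rt :: "nat \<Rightarrow> complex \<Rightarrow> complex" where
  "rt n z = (SOME w. w ^ n = z)"

lemma rt_pow: "n > 0 \<Longrightarrow> rt n z ^ n = z"
  unfolding rt_def using someI_ex[OF kth_root_exists] by blast

lemma rt_zero_iff: "n > 0 \<Longrightarrow> rt n z = 0 \<longleftrightarrow> z = 0"
  using rt_pow[of n z] by (metis power_0_left power_not_zero zero_less_iff_neq_zero)

definition he :: "'a set \<Rightarrow> nat \<Rightarrow> ('a + 'a set \<times> nat) set" where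
  "he e k = Inl ` e \<union> new_vertices e k"

lemma new_vertices_alt: "new_vertices e k = (\<lambda>j. Inr (e, j)) ` {..<k-2}"
  by (auto simp: new_vertices_def)

lemma finite_new_vertices [simp]: "finite (new_vertices e k)"
  by (simp add: new_vertices_alt)

lemma card_new_vertices: "card (new_vertices e k) = k - 2"
  unfolding new_vertices_alt by (subst card_image) (auto simp: inj_on_def)

lemma pow_edges_alt: "pow_edges E k = (\<lambda>e. he e k) ` E"
  by (auto simp: pow_edges_def he_def)

lemma Inl_he: "Inl u \<in> he e k \<longleftrightarrow> u \<in> e"
  by (auto simp: he_def new_vertices_def)

lemma Inr_he: "Inr (e', j) \<in> he e k \<longleftrightarrow> e' = e \<and> j < k - 2"
  by (auto simp: he_def new_vertices_def)

lemma inj_he: "inj_on (\<lambda>e. he e k) E"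
proof (rule inj_onI)
  fix e e' assume "e \<in> E" "e' \<in> E" and eq: "he e k = he e' k"
  show "e = e'"
  proof
    show "e \<subseteq> e'" using eq Inl_he by (metis subsetI)
    show "e' \<subseteq> e" using eq Inl_he by (metis subsetI)
  qed
qed

lemma finite_he: "finite e \<Longrightarrow> finite (he e k)"
  by (simp add: he_def)

lemma card_he: assumes "finite e" "card e = 2" "k \<ge> 2" shows "card (he e k) = k"
proof -
  have "card (he e k) = card (Inl ` e :: ('a + 'a set \<times> nat) set) + card (new_vertices e k)"
    unfolding he_def by (rule card_Un_disjoint) (auto simp: assms new_vertices_def)
  also have "\<dots> = 2 + (k - 2)" using assms by (simp add: card_image card_new_vertices)
  finally show ?thesis using assms by simp
qed

lemma prod_he: assumes "finite e"
  shows "prod x (he e k) = prod (\<lambda>u. x (Inl u)) e * prod x (new_vertices e k)"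
proof -
  have "prod x (he e k) = prod x (Inl ` e) * prod x (new_vertices e k)"
    unfolding he_def by (rule prod.union_disjoint) (auto simp: assms new_vertices_def)
  also have "prod x (Inl ` e) = prod (\<lambda>u. x (Inl u)) e"
    by (subst prod.reindex) (auto simp: inj_on_def)
  finally show ?thesis .
qed

lemma prod_new_vertices: "prod x (new_vertices e k) = (\<Prod>j<k-2. x (Inr (e, j)))"
  unfolding new_vertices_alt by (subst prod.reindex) (auto simp: inj_on_def)

lemma pow_setup:
  assumes G: "graph V E" and k: "k \<ge> 3"
  shows "finite (pow_vertices V E k)"
    and "\<forall>f\<in>pow_edges E k. f \<subseteq> pow_vertices V E k \<and> card f = k"
    and "finite E"
proof -
  have fV: "finite V" and EV: "\<forall>e\<in>E. e \<subseteq> V \<and> card e = 2" using G by (auto simp: graph_def)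
  show fE: "finite E" by (rule finite_subset[of E "Pow V"]) (use EV fV in auto)
  show "finite (pow_vertices V E k)" using fE fV by (simp add: pow_vertices_def)
  show "\<forall>f\<in>pow_edges E k. f \<subseteq> pow_vertices V E k \<and> card f = k"
  proof
    fix f assume "f \<in> pow_edges E k"
    then obtain e where e: "e \<in> E" "f = he e k" by (auto simp: pow_edges_alt)
    have fe: "finite e" using EV e fV finite_subset by blast
    have "f \<subseteq> pow_vertices V E k" using e EV by (auto simp: pow_vertices_def he_def)
    moreover have "card f = k" using card_he[OF fe] e EV k by auto
    ultimately show "f \<subseteq> pow_vertices V E k \<and> card f = k" by simp
  qed
qed

lemma edges_at_new:
  assumes "e \<in> E" "j < k - 2"
  shows "{f\<in>pow_edges E k. Inr (e, j) \<in> f} = {he e k}"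
  using assms by (auto simp: pow_edges_alt Inr_he)

lemma edges_at_old:
  "{f\<in>pow_edges E k. Inl u \<in> f} = (\<lambda>e. he e k) ` {e\<in>E. u \<in> e}"
  by (auto simp: pow_edges_alt Inl_he)

lemma pow_vertices_cases:
  "i \<in> pow_vertices V E k \<longleftrightarrow> (\<exists>u\<in>V. i = Inl u) \<or> (\<exists>e\<in>E. \<exists>j<k-2. i = Inr (e, j))"
  by (auto simp: pow_vertices_def new_vertices_def)

lemma hyp_eig_pow:
  assumes G: "graph V E" and k: "k \<ge> 3"
  shows "hyp_eigenvalue k (pow_vertices V E k) (pow_edges E k) lam \<longleftrightarrow>
    (\<exists>x. (\<exists>i\<in>pow_vertices V E k. x i \<noteq> 0)
       \<and> (\<forall>e\<in>E. \<forall>j<k-2. prod x (he e k - {Inr (e, j)}) = lam * x (Inr (e, j)) ^ (k - 1))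
       \<and> (\<forall>u\<in>V. (\<Sum>e\<in>{e\<in>E. u \<in> e}. prod x (he e k - {Inl u})) = lam * x (Inl u) ^ (k - 1)))"
proof -
  note S = pow_setup[OF G k]
  have eq: "(\<Sum>ys\<in>{ys. length ys = k - 1 \<and> set ys \<subseteq> pow_vertices V E k}.
              adj_tensor k (pow_edges E k) (i # ys) * prod_list (map x ys))
        = (\<Sum>f\<in>{f\<in>pow_edges E k. i\<in>f}. prod x (f - {i}))"
    if "i \<in> pow_vertices V E k" for i x
    by (rule tensor_sum[OF S(1) S(2) that]) (use k in simp)
  have new: "(\<Sum>f\<in>{f\<in>pow_edges E k. Inr (e, j) \<in> f}. prod x (f - {Inr (e, j)}))
      = prod x (he e k - {Inr (e, j)})" if "e \<in> E" "j < k - 2" for x e j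
    by (simp add: edges_at_new[OF that])
  have old: "(\<Sum>f\<in>{f\<in>pow_edges E k. Inl u \<in> f}. prod x (f - {Inl u}))
      = (\<Sum>e\<in>{e\<in>E. u \<in> e}. prod x (he e k - {Inl u}))" for x u
    unfolding edges_at_old by (subst sum.reindex) (auto intro: inj_on_subset[OF inj_he])
  show ?thesis
    unfolding hyp_eigenvalue_def
  proof (intro iffI; elim exE conjE; intro exI conjI)
    fix x assume nz: "\<exists>i\<in>pow_vertices V E k. x i \<noteq> 0"
      and H: "\<forall>i\<in>pow_vertices V E k. (\<Sum>ys\<in>{ys. length ys = k - 1 \<and> set ys \<subseteq> pow_vertices V E k}.
                 adj_tensor k (pow_edges E k) (i # ys) * prod_list (map x ys)) = lam * x i ^ (k - 1)"
    show "\<exists>i\<in>pow_vertices V E k. x i \<noteq> 0" by fact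
    show "\<forall>e\<in>E. \<forall>j<k-2. prod x (he e k - {Inr (e, j)}) = lam * x (Inr (e, j)) ^ (k - 1)"
    proof (intro ballI allI impI)
      fix e j assume ej: "e \<in> E" "j < k - 2"
      then have iW: "Inr (e, j) \<in> pow_vertices V E k" by (auto simp: pow_vertices_cases)
      show "prod x (he e k - {Inr (e, j)}) = lam * x (Inr (e, j)) ^ (k - 1)"
        using H[rule_format, OF iW] eq[OF iW, of x] new[OF ej, of x] by simp
    qed
    show "\<forall>u\<in>V. (\<Sum>e\<in>{e\<in>E. u \<in> e}. prod x (he e k - {Inl u})) = lam * x (Inl u) ^ (k - 1)"
    proof
      fix u assume u: "u \<in> V"
      then have iW: "Inl u \<in> pow_vertices V E k" by (auto simp: pow_vertices_cases)
      show "(\<Sum>e\<in>{e\<in>E. u \<in> e}. prod x (he e k - {Inl u})) = lam * x (Inl u) ^ (k - 1)"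
        using H[rule_format, OF iW] eq[OF iW, of x] old[of x u] by simp
    qed
  next
    fix x assume nz: "\<exists>i\<in>pow_vertices V E k. x i \<noteq> 0"
      and H1: "\<forall>e\<in>E. \<forall>j<k-2. prod x (he e k - {Inr (e, j)}) = lam * x (Inr (e, j)) ^ (k - 1)"
      and H2: "\<forall>u\<in>V. (\<Sum>e\<in>{e\<in>E. u \<in> e}. prod x (he e k - {Inl u})) = lam * x (Inl u) ^ (k - 1)"
    show "\<exists>i\<in>pow_vertices V E k. x i \<noteq> 0" by fact
    show "\<forall>i\<in>pow_vertices V E k. (\<Sum>ys\<in>{ys. length ys = k - 1 \<and> set ys \<subseteq> pow_vertices V E k}.
                 adj_tensor k (pow_edges E k) (i # ys) * prod_list (map x ys)) = lam * x i ^ (k - 1)"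
    proof
      fix i assume iW: "i \<in> pow_vertices V E k"
      then consider (o) u where "u \<in> V" "i = Inl u" | (n) e j where "e \<in> E" "j < k - 2" "i = Inr (e, j)"
        unfolding pow_vertices_cases by blast
      then show "(\<Sum>ys\<in>{ys. length ys = k - 1 \<and> set ys \<subseteq> pow_vertices V E k}.
                 adj_tensor k (pow_edges E k) (i # ys) * prod_list (map x ys)) = lam * x i ^ (k - 1)"
      proof cases
        case o then show ?thesis using eq[OF iW, of x] old[of x u] H2 by simp
      next
        case n then show ?thesis using eq[OF iW, of x] new[OF n(1,2), of x] H1 by simp
      qed
    qed
  qed
qed

lemma adj_sum:
  fixes y :: "'a \<Rightarrow> complex"
  assumes fV: "finite V'" and E': "\<forall>e\<in>E'. e \<subseteq> V' \<and> card e = 2"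
  shows "y u * (\<Sum>j\<in>V'. complex_of_real (signed_adj E' sg u j) * y j)
       = (\<Sum>e\<in>{e\<in>E'. u \<in> e}. complex_of_real (sg e) * prod y e)"
proof -
  let ?g = "\<lambda>e. complex_of_real (sg e) * prod y e"
  let ?J = "{j\<in>V'. {u, j} \<in> E'}"
  have ne: "j \<noteq> u" if "{u, j} \<in> E'" for j
  proof
    assume "j = u"
    then have "card {u, j} = 1" by simp
    moreover have "card {u, j} = 2" using E' that by blast
    ultimately show False by simp
  qed
  have "y u * (\<Sum>j\<in>V'. complex_of_real (signed_adj E' sg u j) * y j)
      = (\<Sum>j\<in>V'. if {u, j} \<in> E' then ?g {u, j} else 0)"
    unfolding sum_distrib_left
  proof (rule sum.cong[OF refl])
    fix j assume "j \<in> V'"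
    show "y u * (complex_of_real (signed_adj E' sg u j) * y j) = (if {u, j} \<in> E' then ?g {u, j} else 0)"
    proof (cases "{u, j} \<in> E'")
      case True
      then have "j \<noteq> u" by (rule ne)
      then show ?thesis using True by (simp add: signed_adj_def)
    qed (simp add: signed_adj_def)
  qed
  also have "\<dots> = (\<Sum>j\<in>?J. ?g {u, j})"
    using sum.inter_filter[OF fV, of "\<lambda>j. ?g {u, j}" "\<lambda>j. {u, j} \<in> E'"] by simp
  also have "\<dots> = (\<Sum>e\<in>(\<lambda>j. {u, j}) ` ?J. ?g e)"
  proof (subst sum.reindex)
    show "inj_on (\<lambda>j. {u, j}) ?J" by (auto simp: inj_on_def doubleton_eq_iff)
  qed simp
  also have "(\<lambda>j. {u, j}) ` ?J = {e\<in>E'. u \<in> e}"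
  proof (intro equalityI subsetI)
    fix e assume "e \<in> (\<lambda>j. {u, j}) ` ?J" then show "e \<in> {e\<in>E'. u \<in> e}" by auto
  next
    fix e assume e: "e \<in> {e\<in>E'. u \<in> e}"
    then have "card e = 2" "u \<in> e" "e \<subseteq> V'" "e \<in> E'" using E' by auto
    then obtain a b where ab: "e = {a, b}" "a \<noteq> b" by (auto simp: card_2_iff)
    then obtain j where "e = {u, j}" using \<open>u \<in> e\<close> by auto
    then show "e \<in> (\<lambda>j. {u, j}) ` ?J" using \<open>e \<subseteq> V'\<close> \<open>e \<in> E'\<close> by auto
  qed
  finally show ?thesis .
qed

lemma forward_dir:
  fixes x :: "'a + 'a set \<times> nat \<Rightarrow> complex"
  assumes G: "graph V E" and k: "k \<ge> 3" and lam: "lam \<noteq> 0"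
    and nz: "\<exists>i\<in>pow_vertices V E k. x i \<noteq> 0"
    and H1: "\<forall>e\<in>E. \<forall>j<k-2. prod x (he e k - {Inr (e, j)}) = lam * x (Inr (e, j)) ^ (k - 1)"
    and H2: "\<forall>u\<in>V. (\<Sum>e\<in>{e\<in>E. u \<in> e}. prod x (he e k - {Inl u})) = lam * x (Inl u) ^ (k - 1)"
  shows "\<exists>V' E' sg beta. signed_subgraph V E V' E' sg \<and> (k = 3 \<longrightarrow> E' = {e\<in>E. e \<subseteq> V'})
           \<and> signed_eigenvalue V' E' sg beta \<and> beta ^ 2 = lam ^ k"
proof -
  obtain m where km: "k = m + 3" using k by (metis add.commute le_Suc_ex)
  have fV: "finite V" and EV: "\<forall>e\<in>E. e \<subseteq> V \<and> card e = 2" using G by (auto simp: graph_def)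
  have fE: "finite E" using pow_setup[OF G k] by simp
  have fe: "finite e" if "e \<in> E" for e using EV that fV finite_subset by blast
  define X where "X u = x (Inl u)" for u
  define P where "P e = prod x (he e k)" for e
  define Q where "Q e = prod X e" for e
  define T where "T e = prod x (new_vertices e k)" for e
  have PQT: "P e = Q e * T e" if "e \<in> E" for e
    unfolding P_def Q_def T_def X_def using prod_he[OF fe[OF that]] by simp
  have a: "lam * x w ^ k = P e" if e: "e \<in> E" and w: "w \<in> new_vertices e k" for e w
  proof -
    obtain j where j: "j < k - 2" "w = Inr (e, j)" using w by (auto simp: new_vertices_def)
    have wh: "w \<in> he e k" using w by (simp add: he_def)
    have "P e = x w * prod x (he e k - {w})"
      unfolding P_def by (rule prod.remove[OF finite_he[OF fe[OF e]] wh])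
    also have "\<dots> = x w * (lam * x w ^ (k - 1))" using H1 e j by simp
    also have "\<dots> = lam * x w ^ Suc (k - 1)" by (simp add: mult_ac)
    also have "Suc (k - 1) = k" using k by simp
    finally show ?thesis by simp
  qed
  have b: "lam * X u ^ k = (\<Sum>e\<in>{e\<in>E. u \<in> e}. P e)" if u: "u \<in> V" for u
  proof -
    have kk: "k = Suc (k - 1)" using k by simp
    have "lam * X u ^ k = X u * (lam * X u ^ (k - 1))" by (subst kk) (simp add: mult_ac)
    also have "\<dots> = X u * (\<Sum>e\<in>{e\<in>E. u \<in> e}. prod x (he e k - {Inl u}))" using H2 u by (simp add: X_def)
    also have "\<dots> = (\<Sum>e\<in>{e\<in>E. u \<in> e}. X u * prod x (he e k - {Inl u}))" by (simp add: sum_distrib_left)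
    also have "\<dots> = (\<Sum>e\<in>{e\<in>E. u \<in> e}. P e)"
    proof (rule sum.cong[OF refl])
      fix e assume e: "e \<in> {e\<in>E. u \<in> e}"
      have "Inl u \<in> he e k" using e by (simp add: Inl_he)
      then show "X u * prod x (he e k - {Inl u}) = P e"
        unfolding P_def X_def using prod.remove[OF finite_he[OF fe] ] e by (metis (mono_tags, lifting) mem_Collect_eq)
    qed
    finally show ?thesis .
  qed
  have c: "lam ^ (k - 2) * P e ^ 2 = Q e ^ k" if e: "e \<in> E" and P0: "P e \<noteq> 0" for e
  proof -
    have T0: "T e \<noteq> 0" using P0 PQT[OF e] by simp
    have "prod (\<lambda>w. lam * x w ^ k) (new_vertices e k) = prod (\<lambda>w. P e) (new_vertices e k)"
      using a[OF e] by (rule prod.cong[OF refl])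
    then have "lam ^ (k - 2) * T e ^ k = P e ^ (k - 2)"
      by (simp add: prod.distrib prod_power_distrib card_new_vertices T_def)
    then have h: "lam ^ (m + 1) * T e ^ (m + 3) = (Q e * T e) ^ (m + 1)"
      using PQT[OF e] km by simp
    have "T e ^ (m + 1) * (lam ^ (m + 1) * T e ^ 2) = lam ^ (m + 1) * T e ^ (m + 3)"
      by (simp add: power_add mult_ac power3_eq_cube power2_eq_square)
    also have "\<dots> = T e ^ (m + 1) * Q e ^ (m + 1)" using h by (simp add: power_mult_distrib mult_ac)
    finally have "lam ^ (m + 1) * T e ^ 2 = Q e ^ (m + 1)"
      using T0 mult_left_cancel[of "T e ^ (m + 1)"] by simp
    then have "lam ^ (m + 1) * (Q e * T e) ^ 2 = Q e ^ (m + 1) * Q e ^ 2"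
      by (simp add: power_mult_distrib mult_ac)
    then show ?thesis using PQT[OF e] km by (simp add: power_add power2_eq_square power3_eq_cube mult_ac)
  qed
  define y where "y u = csqrt (X u ^ k)" for u
  have y2: "y u ^ 2 = X u ^ k" for u by (simp add: y_def)
  have y0: "y u = 0 \<longleftrightarrow> X u = 0" for u using km by (simp add: y_def)
  define V' where "V' = {u\<in>V. X u \<noteq> 0}"
  define E' where "E' = {e\<in>E. P e \<noteq> 0}"
  define beta where "beta = csqrt (lam ^ k)"
  define sg where "sg e = (if P e * beta / lam = prod y e then 1 else (-1::real))" for e
  have beta2: "beta ^ 2 = lam ^ k" by (simp add: beta_def)
  have beta0: "beta \<noteq> 0" using lam by (simp add: beta_def)
  have d: "e \<subseteq> V'" if e: "e \<in> E'" for e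
  proof
    fix u assume u: "u \<in> e"
    have "P e \<noteq> 0" "e \<in> E" using e by (auto simp: E'_def)
    then have "Q e \<noteq> 0" using PQT by auto
    then have "X u \<noteq> 0" using u fe[OF \<open>e \<in> E\<close>] by (auto simp: Q_def)
    then show "u \<in> V'" using u EV \<open>e \<in> E\<close> by (auto simp: V'_def)
  qed
  have esg: "P e * beta / lam = complex_of_real (sg e) * prod y e" if e: "e \<in> E'" for e
  proof -
    have eE: "e \<in> E" and P0: "P e \<noteq> 0" using e by (auto simp: E'_def)
    have "(P e * beta / lam) ^ 2 = P e ^ 2 * lam ^ k / lam ^ 2"
      by (simp add: power_mult_distrib power_divide beta2)
    also have "\<dots> = lam ^ (k - 2) * P e ^ 2" using km lam by (simp add: field_simps power_add power2_eq_square power3_eq_cube)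
    also have "\<dots> = Q e ^ k" by (rule c[OF eE P0])
    also have "\<dots> = (prod y e) ^ 2" by (simp add: Q_def prod_power_distrib y2)
    finally have "P e * beta / lam = prod y e \<or> P e * beta / lam = - prod y e"
      by (simp add: power2_eq_iff)
    then show ?thesis by (auto simp: sg_def)
  qed
  have sub: "signed_subgraph V E V' E' sg"
    unfolding signed_subgraph_def using d by (auto simp: V'_def E'_def sg_def)
  have ind: "k = 3 \<longrightarrow> E' = {e\<in>E. e \<subseteq> V'}"
  proof
    assume k3: "k = 3"
    show "E' = {e\<in>E. e \<subseteq> V'}"
    proof (intro equalityI subsetI)
      fix e assume "e \<in> E'" then show "e \<in> {e\<in>E. e \<subseteq> V'}" using d by (auto simp: E'_def)
    next
      fix e assume e: "e \<in> {e\<in>E. e \<subseteq> V'}"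
      then have eE: "e \<in> E" and eV: "e \<subseteq> V'" by auto
      have Q0: "Q e \<noteq> 0" using eV fe[OF eE] by (auto simp: Q_def V'_def)
      have nv: "new_vertices e k = {Inr (e, 0)}" using k3 by (auto simp: new_vertices_def)
      have "he e k - {Inr (e, 0)} = Inl ` e" using k3 by (auto simp: he_def new_vertices_def)
      then have "prod x (he e k - {Inr (e, 0)}) = Q e"
        by (simp add: Q_def X_def prod.reindex inj_on_def)
      then have "Q e = lam * x (Inr (e, 0)) ^ 2" using H1 eE k3 by simp
      then have "x (Inr (e, 0)) \<noteq> 0" using Q0 by auto
      then have "T e \<noteq> 0" by (simp add: T_def nv)
      then have "P e \<noteq> 0" using PQT[OF eE] Q0 by simp
      then show "e \<in> E'" using eE by (simp add: E'_def)
    qed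
  qed
  have fV': "finite V'" using fV by (simp add: V'_def)
  have E'c: "\<forall>e\<in>E'. e \<subseteq> V' \<and> card e = 2" using d EV by (auto simp: E'_def)
  have eig: "signed_eigenvalue V' E' sg beta"
    unfolding signed_eigenvalue_def
  proof (intro exI conjI)
    show "\<exists>i\<in>V'. y i \<noteq> 0"
    proof -
      obtain i where i: "i \<in> pow_vertices V E k" "x i \<noteq> 0" using nz by blast
      then consider (o) u where "u \<in> V" "i = Inl u" | (n) e j where "e \<in> E" "j < k - 2" "i = Inr (e, j)"
        unfolding pow_vertices_cases by blast
      then show ?thesis
      proof cases
        case o then show ?thesis using i y0 by (auto simp: V'_def X_def)
      next
        case n
        have "Inr (e, j) \<in> new_vertices e k" using n by (simp add: new_vertices_def)
        then have "P e \<noteq> 0" using a[OF n(1)] lam i n by (metis mult_eq_0_iff power_not_zero)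
        then have "e \<subseteq> V'" using d n by (simp add: E'_def)
        moreover obtain u where "u \<in> e" using EV n(1) by (metis card.empty ex_in_conv zero_neq_numeral)
        ultimately show ?thesis using y0 by (auto simp: V'_def)
      qed
    qed
    show "\<forall>i\<in>V'. (\<Sum>j\<in>V'. complex_of_real (signed_adj E' sg i j) * y j) = beta * y i"
    proof
      fix u assume u: "u \<in> V'"
      then have uV: "u \<in> V" and yu: "y u \<noteq> 0" using y0 by (auto simp: V'_def)
      have "y u * (\<Sum>j\<in>V'. complex_of_real (signed_adj E' sg u j) * y j)
          = (\<Sum>e\<in>{e\<in>E'. u \<in> e}. complex_of_real (sg e) * prod y e)"
        by (rule adj_sum[OF fV' E'c])
      also have "\<dots> = (\<Sum>e\<in>{e\<in>E'. u \<in> e}. P e * beta / lam)"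
        using esg by (auto intro: sum.cong)
      also have "\<dots> = (\<Sum>e\<in>{e\<in>E. u \<in> e}. P e * beta / lam)"
        by (rule sum.mono_neutral_left) (use fE in \<open>auto simp: E'_def\<close>)
      also have "\<dots> = (beta / lam) * (\<Sum>e\<in>{e\<in>E. u \<in> e}. P e)"
        by (simp add: sum_distrib_left mult_ac)
      also have "\<dots> = (beta / lam) * (lam * X u ^ k)" using b[OF uV] by simp
      also have "\<dots> = y u * (beta * y u)" using lam by (simp add: y2[symmetric] power2_eq_square)
      finally show "(\<Sum>j\<in>V'. complex_of_real (signed_adj E' sg u j) * y j) = beta * y u"
        using yu by simp
    qed
  qed
  show ?thesis using sub ind eig beta2 by blast
qed

lemma backward_dir:
  fixes y :: "'a \<Rightarrow> complex"
  assumes G: "graph V E" and k: "k \<ge> 3" and lam: "lam \<noteq> 0"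
    and sub: "signed_subgraph V E V' E' sg" and ind: "k = 3 \<longrightarrow> E' = {e\<in>E. e \<subseteq> V'}"
    and ynz: "\<exists>i\<in>V'. y i \<noteq> 0"
    and yeq: "\<forall>i\<in>V'. (\<Sum>j\<in>V'. complex_of_real (signed_adj E' sg i j) * y j) = beta * y i"
    and b2: "beta ^ 2 = lam ^ k"
  shows "\<exists>x. (\<exists>i\<in>pow_vertices V E k. x i \<noteq> 0)
       \<and> (\<forall>e\<in>E. \<forall>j<k-2. prod x (he e k - {Inr (e, j)}) = lam * x (Inr (e, j)) ^ (k - 1))
       \<and> (\<forall>u\<in>V. (\<Sum>e\<in>{e\<in>E. u \<in> e}. prod x (he e k - {Inl u})) = lam * x (Inl u) ^ (k - 1))"
proof -
  obtain m where km: "k = m + 3" using k by (metis add.commute le_Suc_ex)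
  have kpos: "k > 0" using k by simp
  have fV: "finite V" and EV: "\<forall>e\<in>E. e \<subseteq> V \<and> card e = 2" using G by (auto simp: graph_def)
  have fE: "finite E" using pow_setup[OF G k] by simp
  have fe: "finite e" if "e \<in> E" for e using EV that fV finite_subset by blast
  have V'V: "V' \<subseteq> V" and E'E: "E' \<subseteq> E" and E'V': "\<forall>e\<in>E'. e \<subseteq> V'"
    and sgpm: "\<forall>e\<in>E'. sg e = 1 \<or> sg e = -1" using sub by (auto simp: signed_subgraph_def)
  have fV': "finite V'" using V'V fV finite_subset by blast
  have E'c: "\<forall>e\<in>E'. e \<subseteq> V' \<and> card e = 2" using E'V' E'E EV by blast
  have beta0: "beta \<noteq> 0" using b2 lam by auto
  define y' where "y' u = (if u \<in> V' then y u else 0)" for u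
  define X where "X u = rt k (y' u ^ 2)" for u
  have Xk: "X u ^ k = y' u ^ 2" for u by (simp add: X_def rt_pow kpos)
  have X0: "X u = 0 \<longleftrightarrow> y' u = 0" for u by (simp add: X_def rt_zero_iff kpos)
  define D where "D e = (if e \<in> E' then lam / beta * complex_of_real (sg e) * prod y' e else 0)" for e
  define Q where "Q e = prod X e" for e
  define a where "a e = rt k (D e / lam)" for e
  define b where "b e = D e / (Q e * a e ^ m)" for e
  define x :: "'a + 'a set \<times> nat \<Rightarrow> complex" where "x i = (case i of Inl u \<Rightarrow> X u
      | Inr (e, j) \<Rightarrow> (if D e = 0 then 0 else if j = 0 then b e else a e))" for i
  have xInl: "x (Inl u) = X u" for u by (simp add: x_def)
  have xInr: "x (Inr (e, j)) = (if D e = 0 then 0 else if j = 0 then b e else a e)" for e j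
    by (simp add: x_def)
  have sgnz: "complex_of_real (sg e) \<noteq> 0" if "e \<in> E'" for e using sgpm that by auto
  have sg2: "(complex_of_real (sg e)) ^ 2 = 1" if "e \<in> E'" for e using sgpm that by auto
  have Dnz: "e \<in> E' \<and> Q e \<noteq> 0" if e: "e \<in> E" and D0: "D e \<noteq> 0" for e
  proof -
    have eE': "e \<in> E'" using D0 by (auto simp: D_def split: if_splits)
    then have "prod y' e \<noteq> 0" using D0 by (auto simp: D_def)
    then have "\<forall>u\<in>e. y' u \<noteq> 0" using fe[OF e] by auto
    then have "Q e \<noteq> 0" using fe[OF e] X0 by (auto simp: Q_def)
    then show ?thesis using eE' by simp
  qed
  have QD: "Q e ^ k = D e ^ 2 * lam ^ (m + 1)" if e: "e \<in> E'" for e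
  proof -
    have "Q e ^ k = (prod y' e) ^ 2" by (simp add: Q_def prod_power_distrib Xk)
    also have "\<dots> = (lam / beta * complex_of_real (sg e) * prod y' e) ^ 2 * (beta ^ 2 / lam ^ 2)"
      using lam beta0 sg2[OF e] by (simp add: power_mult_distrib power_divide)
    also have "\<dots> = D e ^ 2 * lam ^ (m + 1)"
      using e lam km b2 by (simp add: D_def power_add power2_eq_square power3_eq_cube)
    finally show ?thesis .
  qed
  have ak: "a e ^ k = D e / lam" for e by (simp add: a_def rt_pow kpos)
  have bk: "b e ^ k = D e / lam" if e: "e \<in> E" and D0: "D e \<noteq> 0" for e
  proof -
    have eE': "e \<in> E'" and Q0: "Q e \<noteq> 0" using Dnz[OF e D0] by auto
    have a0: "a e \<noteq> 0"
      proof
        assume "a e = 0"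
        then have "a e ^ k = 0" using kpos by simp
        then show False using ak[of e] D0 lam by simp
      qed
    have "b e ^ k = D e ^ k / (Q e ^ k * (a e ^ k) ^ m)"
      by (simp add: b_def power_divide power_mult_distrib power_mult[symmetric] mult.commute)
    also have "\<dots> = D e ^ (m + 3) / (D e ^ 2 * lam ^ (m + 1) * (D e / lam) ^ m)"
      using QD[OF eE'] ak km by simp
    also have "\<dots> = D e / lam"
      using D0 lam by (simp add: power_divide power_add field_simps power2_eq_square power3_eq_cube)
    finally show ?thesis .
  qed
  have xk: "x (Inr (e, j)) ^ k = D e / lam" if e: "e \<in> E" for e j
    using bk[OF e] ak[of e] kpos by (auto simp: xInr)
  have T: "prod x (new_vertices e k) = (if D e = 0 then 0 else b e * a e ^ m)" for e
  proof -
    have "prod x (new_vertices e k) = (\<Prod>j<Suc m. x (Inr (e, j)))"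
      using km by (simp add: prod_new_vertices)
    also have "\<dots> = x (Inr (e, 0)) * (\<Prod>j<m. x (Inr (e, Suc j)))"
      by (rule prod.lessThan_Suc_shift)
    also have "\<dots> = (if D e = 0 then 0 else b e * a e ^ m)" by (simp add: xInr)
    finally show ?thesis .
  qed
  have P: "prod x (he e k) = D e" if e: "e \<in> E" for e
  proof -
    have "prod x (he e k) = Q e * prod x (new_vertices e k)"
      using prod_he[OF fe[OF e], of x k] by (simp add: Q_def xInl)
    also have "\<dots> = D e"
    proof (cases "D e = 0")
      case True then show ?thesis by (simp add: T)
    next
      case False
      have Q0: "Q e \<noteq> 0" using Dnz[OF e False] by auto
      have a0: "a e \<noteq> 0"
      proof
        assume "a e = 0"
        then have "a e ^ k = 0" using kpos by simp
        then show False using ak[of e] False lam by simp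
      qed
      show ?thesis using False Q0 a0 by (simp add: T b_def)
    qed
    finally show ?thesis .
  qed
  show ?thesis
  proof (intro exI conjI)
    show "\<exists>i\<in>pow_vertices V E k. x i \<noteq> 0"
    proof -
      obtain i where "i \<in> V'" "y i \<noteq> 0" using ynz by blast
      then have "Inl i \<in> pow_vertices V E k" "x (Inl i) \<noteq> 0"
        using V'V X0 by (auto simp: pow_vertices_def xInl y'_def)
      then show ?thesis by blast
    qed
    show "\<forall>e\<in>E. \<forall>j<k-2. prod x (he e k - {Inr (e, j)}) = lam * x (Inr (e, j)) ^ (k - 1)"
    proof (intro ballI allI impI)
      fix e j assume e: "e \<in> E" and j: "j < k - 2"
      let ?w = "Inr (e, j) :: 'a + 'a set \<times> nat"
      have wh: "?w \<in> he e k" using j by (simp add: Inr_he)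
      have finh: "finite (he e k - {?w})" using finite_he[OF fe[OF e]] by simp
      have kk: "k = Suc (k - 1)" using k by simp
      show "prod x (he e k - {?w}) = lam * x ?w ^ (k - 1)"
      proof (cases "D e = 0")
        case False
        have xw0: "x ?w \<noteq> 0"
        proof
          assume "x ?w = 0"
          then have "x ?w ^ k = 0" using kpos by simp
          then show False using xk[OF e, of j] False lam by simp
        qed
        have "x ?w * prod x (he e k - {?w}) = prod x (he e k)"
          by (rule prod.remove[OF finite_he[OF fe[OF e]] wh, symmetric])
        also have "\<dots> = lam * x ?w ^ k" using P[OF e] xk[OF e, of j] lam by simp
        also have "\<dots> = x ?w * (lam * x ?w ^ (k - 1))" by (subst kk) (simp add: mult_ac)
        finally show ?thesis using xw0 by simp
      next
        case True
        have xw: "x ?w = 0" using True by (simp add: xInr)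
        have "\<exists>z\<in>he e k - {?w}. x z = 0"
        proof (cases "e \<in> E'")
          case True
          then have "prod y' e = 0" using \<open>D e = 0\<close> lam beta0 sgnz[OF True] by (simp add: D_def)
          then obtain u where "u \<in> e" "y' u = 0" using fe[OF e] by auto
          then show ?thesis using X0 by (intro bexI[of _ "Inl u"]) (auto simp: xInl Inl_he)
        next
          case nE': False
          show ?thesis
          proof (cases "k = 3")
            case True
            then have "\<not> e \<subseteq> V'" using ind e nE' by auto
            then obtain u where "u \<in> e" "u \<notin> V'" by auto
            then show ?thesis using X0 by (intro bexI[of _ "Inl u"]) (auto simp: xInl Inl_he y'_def)
          next
            case False
            let ?j = "if j = 0 then 1 else 0"
            have "?j < k - 2" using False k by auto
            then show ?thesis using \<open>D e = 0\<close>
              by (intro bexI[of _ "Inr (e, ?j)"]) (auto simp: xInr Inr_he)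
          qed
        qed
        then have "prod x (he e k - {?w}) = 0" using finh by simp
        then show ?thesis using xw k by simp
      qed
    qed
    show "\<forall>u\<in>V. (\<Sum>e\<in>{e\<in>E. u \<in> e}. prod x (he e k - {Inl u})) = lam * x (Inl u) ^ (k - 1)"
    proof
      fix u assume u: "u \<in> V"
      have kk: "k = Suc (k - 1)" using k by simp
      show "(\<Sum>e\<in>{e\<in>E. u \<in> e}. prod x (he e k - {Inl u})) = lam * x (Inl u) ^ (k - 1)"
      proof (cases "X u = 0")
        case False
        then have uV': "u \<in> V'" and yu: "y' u = y u" using X0 by (auto simp: y'_def split: if_splits)
        have "X u * (\<Sum>e\<in>{e\<in>E. u \<in> e}. prod x (he e k - {Inl u}))
            = (\<Sum>e\<in>{e\<in>E. u \<in> e}. X u * prod x (he e k - {Inl u}))" by (simp add: sum_distrib_left)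
        also have "\<dots> = (\<Sum>e\<in>{e\<in>E. u \<in> e}. D e)"
        proof (rule sum.cong[OF refl])
          fix e assume e: "e \<in> {e\<in>E. u \<in> e}"
          have "Inl u \<in> he e k" using e by (simp add: Inl_he)
          then have "prod x (he e k) = x (Inl u) * prod x (he e k - {Inl u})"
            using prod.remove[OF finite_he[OF fe]] e by blast
          then show "X u * prod x (he e k - {Inl u}) = D e" using P e by (simp add: xInl)
        qed
        also have "\<dots> = (\<Sum>e\<in>{e\<in>E'. u \<in> e}. D e)"
          by (rule sum.mono_neutral_right) (use fE E'E in \<open>auto simp: D_def\<close>)
        also have "\<dots> = (\<Sum>e\<in>{e\<in>E'. u \<in> e}. lam / beta * (complex_of_real (sg e) * prod y' e))"
          by (rule sum.cong[OF refl]) (simp add: D_def)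
        also have "\<dots> = lam / beta * (y' u * (\<Sum>j\<in>V'. complex_of_real (signed_adj E' sg u j) * y' j))"
          unfolding adj_sum[OF fV' E'c] by (simp add: sum_distrib_left)
        also have "(\<Sum>j\<in>V'. complex_of_real (signed_adj E' sg u j) * y' j)
             = (\<Sum>j\<in>V'. complex_of_real (signed_adj E' sg u j) * y j)"
          by (rule sum.cong[OF refl]) (simp add: y'_def)
        also have "\<dots> = beta * y u" using yeq uV' by blast
        also have "lam / beta * (y' u * (beta * y u)) = lam * y' u ^ 2"
          using beta0 yu by (simp add: power2_eq_square)
        also have "\<dots> = X u * (lam * X u ^ (k - 1))" by (subst Xk[symmetric], subst kk) (simp add: mult_ac)
        finally show ?thesis using False by (simp add: xInl)
      next
        case True
        have "prod x (he e k - {Inl u}) = 0" if e: "e \<in> {e\<in>E. u \<in> e}" for e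
        proof -
          have eE: "e \<in> E" and ue: "u \<in> e" using e by auto
          have D0: "D e = 0"
          proof (rule ccontr)
            assume "D e \<noteq> 0"
            then have "Q e \<noteq> 0" using Dnz[OF eE] by auto
            then show False using True ue fe[OF eE] by (auto simp: Q_def)
          qed
          have "Inr (e, 0) \<in> he e k - {Inl u}" using k by (auto simp: Inr_he)
          moreover have "x (Inr (e, 0)) = 0" using D0 by (simp add: xInr)
          ultimately show ?thesis using finite_he[OF fe[OF eE]] by (metis finite_Diff prod_zero_iff)
        qed
        then show ?thesis using True k by (simp add: xInl)
      qed
    qed
  qed
qed

lemma prod_indicator_zero:
  assumes "finite A" "card A \<ge> 2"
  shows "prod (\<lambda>i. if i = p then (1::complex) else 0) A = 0"
proof -
  have "\<exists>z\<in>A. z \<noteq> p"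
  proof (rule ccontr)
    assume "\<not> (\<exists>z\<in>A. z \<noteq> p)"
    then have "A \<subseteq> {p}" by auto
    then have "card A \<le> 1" using card_mono[of "{p}" A] by simp
    then show False using assms by simp
  qed
  then show ?thesis using assms(1) by (auto simp: prod_zero_iff)
qed

lemma lam_zero_case:
  assumes G: "graph V E" and k: "k \<ge> 3"
  shows "hyp_eigenvalue k (pow_vertices V E k) (pow_edges E k) 0 \<longleftrightarrow> V \<noteq> {}"
proof
  assume "hyp_eigenvalue k (pow_vertices V E k) (pow_edges E k) 0"
  then obtain i where i: "i \<in> pow_vertices V E k" unfolding hyp_eigenvalue_def by blast
  have EV: "\<forall>e\<in>E. e \<subseteq> V \<and> card e = 2" using G by (auto simp: graph_def)
  show "V \<noteq> {}"
  proof
    assume V: "V = {}"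
    then have "E = {}" using EV by fastforce
    then show False using i V by (simp add: pow_vertices_def)
  qed
next
  assume "V \<noteq> {}"
  then obtain u where u: "u \<in> V" by blast
  have fV: "finite V" and EV: "\<forall>e\<in>E. e \<subseteq> V \<and> card e = 2" using G by (auto simp: graph_def)
  have fe: "finite e" if "e \<in> E" for e using EV that fV finite_subset by blast
  define x :: "'a + 'a set \<times> nat \<Rightarrow> complex" where "x i = (if i = Inl u then 1 else 0)" for i
  have big: "prod x (he e k - {z}) = 0" if e: "e \<in> E" and z: "z \<in> he e k" for e z
  proof -
    have "card (he e k - {z}) = k - 1" using card_he[OF fe[OF e]] EV e k z finite_he[OF fe[OF e]]
      by (simp add: card_Diff_singleton)
    then show ?thesis unfolding x_def using k finite_he[OF fe[OF e]]
      by (intro prod_indicator_zero) auto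
  qed
  have "\<exists>x :: 'a + 'a set \<times> nat \<Rightarrow> complex. (\<exists>i\<in>pow_vertices V E k. x i \<noteq> 0)
       \<and> (\<forall>e\<in>E. \<forall>j<k-2. prod x (he e k - {Inr (e, j)}) = 0 * x (Inr (e, j)) ^ (k - 1))
       \<and> (\<forall>u\<in>V. (\<Sum>e\<in>{e\<in>E. u \<in> e}. prod x (he e k - {Inl u})) = 0 * x (Inl u) ^ (k - 1))"
  proof (rule exI[of _ x], intro conjI)
    show "\<exists>i\<in>pow_vertices V E k. x i \<noteq> 0" using u by (auto simp: x_def pow_vertices_def)
    show "\<forall>e\<in>E. \<forall>j<k-2. prod x (he e k - {Inr (e, j)}) = 0 * x (Inr (e, j)) ^ (k - 1)"
      using big by (auto simp: Inr_he)
    show "\<forall>u\<in>V. (\<Sum>e\<in>{e\<in>E. u \<in> e}. prod x (he e k - {Inl u})) = 0 * x (Inl u) ^ (k - 1)"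
      using big by (auto simp: Inl_he intro!: sum.neutral)
  qed
  then show "hyp_eigenvalue k (pow_vertices V E k) (pow_edges E k) 0"
    using hyp_eig_pow[OF G k] by simp
qed

theorem theorem1:
  fixes V :: "'a set" and E :: "'a set set" and k :: nat and lam :: complex
  assumes "graph V E" and "k \<ge> 3"
  shows "hyp_eigenvalue k (pow_vertices V E k) (pow_edges E k) lam \<longleftrightarrow>
    (if k = 3 then
       (\<exists>V' E' sg beta. signed_induced_subgraph V E V' E' sg \<and>
          signed_eigenvalue V' E' sg beta \<and> beta ^ 2 = lam ^ k)
     else
       (\<exists>V' E' sg beta. signed_subgraph V E V' E' sg \<and>
          signed_eigenvalue V' E' sg beta \<and> beta ^ 2 = lam ^ k))"
proof -
  define R where "R = (\<exists>V' E' sg beta. signed_subgraph V E V' E' sg \<and> (k = 3 \<longrightarrow> E' = {e\<in>E. e \<subseteq> V'})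
           \<and> signed_eigenvalue V' E' sg beta \<and> beta ^ 2 = lam ^ k)"
  have RHS: "(if k = 3 then
       (\<exists>V' E' sg beta. signed_induced_subgraph V E V' E' sg \<and>
          signed_eigenvalue V' E' sg beta \<and> beta ^ 2 = lam ^ k)
     else
       (\<exists>V' E' sg beta. signed_subgraph V E V' E' sg \<and>
          signed_eigenvalue V' E' sg beta \<and> beta ^ 2 = lam ^ k)) = R"
    unfolding R_def signed_induced_subgraph_def by auto
  have EV: "\<forall>e\<in>E. e \<subseteq> V \<and> card e = 2" using assms(1) by (auto simp: graph_def)
  have "hyp_eigenvalue k (pow_vertices V E k) (pow_edges E k) lam = R"
  proof (cases "lam = 0")
    case False
    show ?thesis
    proof
      assume "hyp_eigenvalue k (pow_vertices V E k) (pow_edges E k) lam"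
      then obtain x where "(\<exists>i\<in>pow_vertices V E k. x i \<noteq> 0)"
       "(\<forall>e\<in>E. \<forall>j<k-2. prod x (he e k - {Inr (e, j)}) = lam * x (Inr (e, j)) ^ (k - 1))"
       "(\<forall>u\<in>V. (\<Sum>e\<in>{e\<in>E. u \<in> e}. prod x (he e k - {Inl u})) = lam * x (Inl u) ^ (k - 1))"
        using hyp_eig_pow[OF assms] by blast
      from forward_dir[OF assms False this] show R unfolding R_def .
    next
      assume R
      then obtain V' E' sg beta where sub: "signed_subgraph V E V' E' sg" and ind: "k = 3 \<longrightarrow> E' = {e\<in>E. e \<subseteq> V'}"
        and eig: "signed_eigenvalue V' E' sg beta" and b2: "beta ^ 2 = lam ^ k" unfolding R_def by blast
      from eig obtain y :: "'a \<Rightarrow> complex" where "\<exists>i\<in>V'. y i \<noteq> 0"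
        "\<forall>i\<in>V'. (\<Sum>j\<in>V'. complex_of_real (signed_adj E' sg i j) * y j) = beta * y i"
        unfolding signed_eigenvalue_def by blast
      from backward_dir[OF assms False sub ind this b2]
      show "hyp_eigenvalue k (pow_vertices V E k) (pow_edges E k) lam"
        using hyp_eig_pow[OF assms] by blast
    qed
  next
    case True
    have "R \<longleftrightarrow> V \<noteq> {}"
    proof
      assume R
      then obtain V' E' sg beta where sub: "signed_subgraph V E V' E' sg"
        and eig: "signed_eigenvalue V' E' sg beta" unfolding R_def by blast
      then show "V \<noteq> {}" by (auto simp: signed_subgraph_def signed_eigenvalue_def)
    next
      assume "V \<noteq> {}"
      then obtain u where u: "u \<in> V" by blast
      have "signed_subgraph V E {u} {} (\<lambda>_. 1)" using u by (simp add: signed_subgraph_def)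
      moreover have "k = 3 \<longrightarrow> ({} :: 'a set set) = {e\<in>E. e \<subseteq> {u}}"
      proof
        show "{} = {e\<in>E. e \<subseteq> {u}}"
        proof (rule sym, rule equals0I)
          fix e assume "e \<in> {e\<in>E. e \<subseteq> {u}}"
          then have "card e = 2" "e \<subseteq> {u}" using EV by auto
          then have "card e \<le> 1" using card_mono[of "{u}" e] by simp
          then show False using \<open>card e = 2\<close> by simp
        qed
      qed
      moreover have "signed_eigenvalue {u} {} (\<lambda>_. 1) 0"
        unfolding signed_eigenvalue_def
        by (rule exI[of _ "\<lambda>_. 1"]) (simp add: signed_adj_def)
      moreover have "(0::complex) ^ 2 = lam ^ k" using True assms(2) by simp
      ultimately show R unfolding R_def by blast
    qed
    then show ?thesis using lam_zero_case[OF assms] True by simp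
  qed
  then show ?thesis using RHS by simp
qed

end
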